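(* $\mathfrak{r}_{\mathrm{game}}^{\mathrm{I}} \ge \max\{\mathfrak{r},\mathfrak{d}\}$.
   Context: For $x\subseteq\omega$ and $y\in[\omega]^\omega$, $y$ reaps $x$ if $y\subseteq^* x$ or $y\subseteq^*\omega\setminus x$ (where $A\subseteq^* B$ means $A\setminus B$ is finite). $\mathfrak{r}$ is the least size of $\mathcal{A}\subseteq[\omega]^\omega$ such that every $x\subseteq\omega$ is reaped by some member of $\mathcal{A}$. $\mathfrak{d}$ is the dominating number (least size of a family $\mathcal{D}\subseteq\omega^\omega$ such that every $x\in\omega^\omega$ is eventually dominated by some member of $\mathcal{D}$). For $\mathcal{A}\subseteq[\omega]^\omega$, the reaping game with respect to $\mathcal{A}$: at round $k$, Player I plays $n_k\in\omega$ with $n_0<n_1<\cdots$, and then Player II plays $i_k\in\{0,1\}$. Player II wins iff there is $A\in\mathcal{A}$ such that $\{n_k:k\in\omega\}\cap A=\{n_k: i_k=1\}$ and $A$ reaps $\{n_k:k\in\omega\}$. $\mathfrak{r}_{\mathrm{game}}^{\mathrm{I}}$ is the least $|\mathcal{A}|$ such that Player I has no winning strategy in the reaping game with respect to $\mathcal{A}$. *)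

theory Defs
  imports Main
begin

definition reaps :: "nat set \<Rightarrow> nat set \<Rightarrow> bool" where
  "reaps y x \<longleftrightarrow> infinite y \<and> (finite (y - x) \<or> finite (y - (UNIV - x)))"

text \<open>Reaping family: a family of infinite sets reaping every subset of omega.
  The reaping number r is the least cardinality of such a family.\<close>
definition reaping_family :: "nat set set \<Rightarrow> bool" where
  "reaping_family R \<longleftrightarrow> (\<forall>A\<in>R. infinite A) \<and> (\<forall>x. \<exists>A\<in>R. reaps A x)"

text \<open>Dominating family (eventual domination, f \<le>* g).
  The dominating number d is the least cardinality of such a family.\<close>
definition dominating_family :: "(nat \<Rightarrow> nat) set \<Rightarrow> bool" where
  "dominating_family D \<longleftrightarrow> (\<forall>f. \<exists>g\<in>D. \<forall>\<^sub>F n in sequentially. f n \<le> g n)"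

text \<open>A strategy for Player I maps the list of Player II's previous moves
  (i_0,...,i_{k-1}) to Player I's move n_k.  (Player I's own earlier moves are
  determined by these.)  The strategy must obey the rule n_0 < n_1 < ...\<close>
definition legal_strategy_I :: "(bool list \<Rightarrow> nat) \<Rightarrow> bool" where
  "legal_strategy_I \<sigma> \<longleftrightarrow> (\<forall>h b. \<sigma> h < \<sigma> (h @ [b]))"

definition play_I :: "(bool list \<Rightarrow> nat) \<Rightarrow> (nat \<Rightarrow> bool) \<Rightarrow> nat \<Rightarrow> nat" where
  "play_I \<sigma> y k = \<sigma> (map y [0..<k])"

definition II_wins :: "nat set set \<Rightarrow> (nat \<Rightarrow> nat) \<Rightarrow> (nat \<Rightarrow> bool) \<Rightarrow> bool" where
  "II_wins \<A> n i \<longleftrightarrow>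
     (\<exists>A\<in>\<A>. range n \<inter> A = {n k | k. i k} \<and> reaps A (range n))"

definition I_has_winning_strategy :: "nat set set \<Rightarrow> bool" where
  "I_has_winning_strategy \<A> \<longleftrightarrow>
     (\<exists>\<sigma>. legal_strategy_I \<sigma> \<and> (\<forall>y. \<not> II_wins \<A> (play_I \<sigma> y) y))"

end

theory Submission
  imports Defs "HOL-Library.Infinite_Set"
begin

primrec tau :: "(nat \<Rightarrow> nat) \<Rightarrow> bool list \<Rightarrow> nat" where
  "tau F [] = 0"
| "tau F (b # t) = (if b then F (tau F t) else tau F t + 1)"

definition nxt :: "nat set \<Rightarrow> nat \<Rightarrow> nat" where
  "nxt A m = (LEAST a. a \<in> A \<and> m < a)"

lemma nxt_props:
  assumes "infinite A"
  shows "nxt A m \<in> A" "m < nxt A m" "\<And>a. a \<in> A \<Longrightarrow> m < a \<Longrightarrow> nxt A m \<le> a"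
proof -
  have ex: "\<exists>a. a \<in> A \<and> m < a" using assms infinite_nat_iff_unbounded by auto
  show "nxt A m \<in> A" "m < nxt A m" unfolding nxt_def using LeastI_ex[OF ex] by auto
  show "\<And>a. a \<in> A \<Longrightarrow> m < a \<Longrightarrow> nxt A m \<le> a" unfolding nxt_def by (simp add: Least_le)
qed

lemma reaping_part:
  assumes "\<forall>A\<in>\<A>. infinite A" and "\<not> I_has_winning_strategy \<A>"
  shows "reaping_family \<A>"
proof (rule ccontr)
  assume "\<not> reaping_family \<A>"
  then obtain x where nx: "\<forall>A\<in>\<A>. \<not> reaps A x" using assms(1) unfolding reaping_family_def by blast
  define x' where "x' = (if finite x then UNIV else x)"
  have inf: "infinite x'" unfolding x'_def by auto
  have nx': "\<forall>A\<in>\<A>. \<not> reaps A x'"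
  proof
    fix A assume A: "A \<in> \<A>"
    show "\<not> reaps A x'"
    proof (cases "finite x")
      case True
      have "A - (UNIV - x) \<subseteq> x" by blast
      then have "finite (A - (UNIV - x))" using True by (rule finite_subset)
      then have "reaps A x" using A assms(1) unfolding reaps_def by blast
      with nx A show ?thesis by blast
    next
      case False then show ?thesis using nx A unfolding x'_def by auto
    qed
  qed
  define \<sigma> where "\<sigma> = (\<lambda>h::bool list. enumerate x' (length h))"
  have "legal_strategy_I \<sigma>" unfolding legal_strategy_I_def \<sigma>_def
    using enumerate_mono[OF _ inf] by simp
  moreover have "\<forall>y. \<not> II_wins \<A> (play_I \<sigma> y) y"
  proof
    fix y
    have "play_I \<sigma> y = enumerate x'" unfolding play_I_def \<sigma>_def by auto
    then show "\<not> II_wins \<A> (play_I \<sigma> y) y" unfolding II_wins_def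
      using range_enumerate[OF inf] nx' by auto
  qed
  ultimately have "I_has_winning_strategy \<A>" unfolding I_has_winning_strategy_def by blast
  with assms(2) show False by blast
qed

lemma dom_part:
  assumes "\<forall>A\<in>\<A>. infinite A" and "\<not> I_has_winning_strategy \<A>"
  shows "dominating_family ((\<lambda>A m. nxt A (nxt A m)) ` \<A>)"
  unfolding dominating_family_def
proof
  fix f :: "nat \<Rightarrow> nat"
  define F where "F = (\<lambda>x. x + 1 + sum f {..x})"
  have Fmono: "\<And>a b. a \<le> b \<Longrightarrow> F a \<le> F b" unfolding F_def
    by (simp add: add_mono sum_mono2)
  have Ff: "\<And>x. f x \<le> F x"
  proof -
    fix x have "f x \<le> sum f {..x}" by (rule member_le_sum) auto
    then show "f x \<le> F x" unfolding F_def by simp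
  qed
  have Fgt: "\<And>x. x < F x" unfolding F_def by simp
  define \<sigma> where "\<sigma> = (\<lambda>h. tau F (rev h))"
  have "legal_strategy_I \<sigma>" unfolding legal_strategy_I_def \<sigma>_def using Fgt by simp
  then obtain y where "II_wins \<A> (play_I \<sigma> y) y"
    using assms(2) unfolding I_has_winning_strategy_def by blast
  define n where "n = play_I \<sigma> y"
  have n0: "n 0 = 0" unfolding n_def play_I_def \<sigma>_def by simp
  have nS: "\<And>k. n (Suc k) = (if y k then F (n k) else n k + 1)"
    unfolding n_def play_I_def \<sigma>_def by simp
  have smono: "strict_mono n"
    unfolding strict_mono_Suc_iff by (simp add: nS Fgt)
  obtain A where A: "A \<in> \<A>" "range n \<inter> A = {n k | k. y k}" "reaps A (range n)"
    using \<open>II_wins \<A> (play_I \<sigma> y) y\<close> unfolding II_wins_def n_def by blast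
  have infA: "infinite A" using A(1) assms(1) by blast
  show "\<exists>g\<in>(\<lambda>A m. nxt A (nxt A m)) ` \<A>. \<forall>\<^sub>F m in sequentially. f m \<le> g m"
  proof (cases "finite (A - range n)")
    case True
    then obtain B where B: "\<And>a. a \<in> A - range n \<Longrightarrow> a \<le> B"
      using finite_nat_set_iff_bounded_le by meson
    define M where "M = Suc B"
    have M: "\<And>a. a \<in> A \<Longrightarrow> M \<le> a \<Longrightarrow> a \<in> range n"
    proof (rule ccontr)
      fix a assume "a \<in> A" "M \<le> a" "a \<notin> range n"
      then have "a \<le> B" using B by blast
      with \<open>M \<le> a\<close> show False unfolding M_def by simp
    qed
    have "\<forall>m\<ge>M. f m \<le> nxt A (nxt A m)"
    proof (intro allI impI)
      fix m assume "M \<le> m"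
      let ?a = "nxt A m"
      have a: "?a \<in> A" "m < ?a" using nxt_props[OF infA] by auto
      then have "?a \<in> range n \<inter> A" using M \<open>M \<le> m\<close> by auto
      then have "?a \<in> {n k | k. y k}" using A(2) by simp
      then obtain j where j: "?a = n j" "y j" by blast
      let ?b = "nxt A ?a"
      have b: "?b \<in> A" "?a < ?b" using nxt_props[OF infA] by auto
      have "M \<le> ?b" using \<open>M \<le> m\<close> a(2) b(2) by linarith
      then have "?b \<in> range n" using M b(1) by blast
      then obtain j' where j': "?b = n j'" by blast
      have "j < j'" using b(2) j j' smono by (metis strict_mono_less)
      then have "n (Suc j) \<le> n j'" using smono by (simp add: strict_mono_less_eq)
      moreover have "n (Suc j) = F (n j)" using nS j by simp
      moreover have "F m \<le> F (n j)" using Fmono a j by simp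
      ultimately show "f m \<le> nxt A (nxt A m)" using Ff[of m] j' by linarith
    qed
    then have ev: "\<forall>\<^sub>F m in sequentially. f m \<le> nxt A (nxt A m)"
      unfolding eventually_sequentially by blast
    have img: "(\<lambda>m. nxt A (nxt A m)) \<in> (\<lambda>A m. nxt A (nxt A m)) ` \<A>" using A(1) by (rule imageI)
    show ?thesis by (rule bexI[where P="\<lambda>g. \<forall>\<^sub>F m in sequentially. f m \<le> g m", OF ev img])
  next
    case False
    then have fin: "finite (A - (UNIV - range n))" using A(3) unfolding reaps_def by blast
    have "A - (UNIV - range n) = range n \<inter> A" by blast
    then have "finite {n k | k. y k}" using fin A(2) by simp
    moreover have "{n k | k. y k} = n ` {k. y k}" by blast
    moreover have "inj_on n {k. y k}" using smono strict_mono_imp_inj_on inj_on_subset by blast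
    ultimately have "finite {k. y k}" using finite_imageD by metis
    then obtain B where B: "\<And>k. y k \<Longrightarrow> k \<le> B"
      using finite_nat_set_iff_bounded_le by auto
    define K where "K = Suc B"
    have K: "\<And>k. K \<le> k \<Longrightarrow> \<not> y k" using B unfolding K_def by fastforce
    have lin: "\<And>d. n (K + d) = n K + d"
    proof -
      fix d show "n (K + d) = n K + d" by (induction d) (simp_all add: nS K)
    qed
    have "{n K..} \<subseteq> range n"
    proof
      fix a assume "a \<in> {n K..}"
      then have "n (K + (a - n K)) = a" using lin[of "a - n K"] by simp
      then have "a = n (K + (a - n K))" by simp
      then show "a \<in> range n" by blast
    qed
    then have "A \<inter> {n K..} \<subseteq> A - (UNIV - range n)" by blast
    then have f1: "finite (A \<inter> {n K..})" using fin by (rule finite_subset)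
    have f2: "finite (A \<inter> {..<n K})" by simp
    have eqA: "A = (A \<inter> {n K..}) \<union> (A \<inter> {..<n K})" by auto
    have "finite ((A \<inter> {n K..}) \<union> (A \<inter> {..<n K}))" using f1 f2 by (rule finite_UnI)
    then have "finite A" by (simp only: eqA[symmetric])
    then have False using infA by simp
    then show ?thesis by (rule FalseE)
  qed
qed

theorem mainTheorem5:
  fixes \<A> :: "nat set set"
  assumes "\<forall>A\<in>\<A>. infinite A"
    and "\<not> I_has_winning_strategy \<A>"
  shows "(\<exists>R. reaping_family R \<and> (card_of R, card_of \<A>) \<in> ordLeq)
       \<and> (\<exists>D. dominating_family D \<and> (card_of D, card_of \<A>) \<in> ordLeq)"
proof
  show "\<exists>R. reaping_family R \<and> (card_of R, card_of \<A>) \<in> ordLeq"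
  proof (intro exI conjI)
    show "reaping_family \<A>" by (rule reaping_part[OF assms])
    show "(card_of \<A>, card_of \<A>) \<in> ordLeq" by (rule ordIso_imp_ordLeq[OF card_of_refl])
  qed
  show "\<exists>D. dominating_family D \<and> (card_of D, card_of \<A>) \<in> ordLeq"
  proof (intro exI conjI)
    show "dominating_family ((\<lambda>A m. nxt A (nxt A m)) ` \<A>)" by (rule dom_part[OF assms])
    show "(card_of ((\<lambda>A m. nxt A (nxt A m)) ` \<A>), card_of \<A>) \<in> ordLeq" by (rule card_of_image)
  qed
qed

end
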